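(* Let $A$ be either a complete filtered associative algebra or a complete filtered Lie algebra over a field $\mathbb{K}$ of characteristic zero, and let $P:A\to A$ be an idempotent linear map preserving the filtration; put $\tilde P:=\mathrm{id}_A-P$, $A_{1,-}:=P(A_1)$, $A_{1,+}:=\tilde P(A_1)$. Let $\chi$ (resp. $\tilde\chi$) be the BCH-recursion map $A_1\to A_1$ associated to $P$ (resp. to $\tilde P$). Then: (1) (Factorization) $C$ restricts to a bijection $C_-:A_{1,-}\times A_{1,+}\to A_1$; (2) (Formal uniformization) there exists a unique bijection $\Psi:A_{1,+}\times A_{1,-}\to A_{1,-}\times A_{1,+}$ such that for all $a=(a_+,a_-)\in A_{1,+}\times A_{1,-}$, $$\exp(a_+)\exp(a_-)=\exp\big(\pi_-(\Psi(a))\big)\exp\big(\pi_+(\Psi(a))\big),$$ where $\pi_\pm:A_{1,-}\times A_{1,+}\to A_{1,\pm}$ are the projections onto the factors; (3) the inverse of $C_-$ is $D_P(a)=\big(P(\chi(a)),\tilde P(\chi(a))\big)$, $a\in A_1$, and for $a=(a_+,a_-)\in A_{1,+}\times A_{1,-}$, $$\Psi(a)=\Big(P\big(\chi(C(a_+,a_-))\big),\,\tilde P\big(\chi(C(a_+,a_-))\big)\Big)=\Big(P\big(\chi\circ\tilde\chi^{-1}(a_++a_-)\big),\,\tilde P\big(\chi\circ\tilde\chi^{-1}(a_++a_-)\big)\Big).$$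
   Context: A complete filtered associative algebra is an associative algebra $A$ with a decreasing filtration $A=A_0\supseteq A_1\supseteq\cdots$ by subalgebras with $A_mA_n\subseteq A_{m+n}$ and $A\cong\varprojlim A/A_n$; a complete filtered Lie algebra is defined analogously with $[A_m,A_n]\subseteq A_{m+n}$. $\mathrm{BCH}(x,y)$ is the Baker--Campbell--Hausdorff Lie series defined by $\exp(x)\exp(y)=\exp(x+y+\mathrm{BCH}(x,y))$, and $C(u,v):=u+v+\mathrm{BCH}(u,v)$ for $u,v\in A_1$. In the Lie algebra case exponentials are taken in the completion of the universal enveloping algebra. For a filtration-preserving linear map $Q:A\to A$, the BCH-recursion map associated to $Q$ is the unique map $\chi_Q:A_1\to A_1$ with $\chi_Q(a)=a-\mathrm{BCH}\big(Q(\chi_Q(a)),(\mathrm{id}_A-Q)(\chi_Q(a))\big)$ for all $a\in A_1$ (obtained as the limit of the iteration starting at $a$); it is a bijection of $A_1$ with inverse $\chi_Q^{-1}(a)=C\big(Q(a),(\mathrm{id}_A-Q)(a)\big)$. Here $\chi=\chi_P$ and $\tilde\chi=\chi_{\tilde P}$. *)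

theory Defs
  imports Main
begin

definition K_vector_space :: "('k::field \<Rightarrow> 'a::ab_group_add \<Rightarrow> 'a) \<Rightarrow> bool" where
  "K_vector_space sm \<longleftrightarrow>
     (\<forall>c x y. sm c (x + y) = sm c x + sm c y) \<and>
     (\<forall>c d x. sm (c + d) x = sm c x + sm d x) \<and>
     (\<forall>c d x. sm c (sm d x) = sm (c * d) x) \<and>
     (\<forall>x. sm 1 x = x)"

text \<open>A decreasing filtration A = A_0 \<supseteq> A_1 \<supseteq> ... by K-subspaces, such that the canonical
  map A \<rightarrow> lim A/A_n is bijective (injective: Hausdorff; surjective: every compatible family of
  representatives is realised).\<close>

definition complete_filtration :: "('k::field \<Rightarrow> 'a::ab_group_add \<Rightarrow> 'a) \<Rightarrow> (nat \<Rightarrow> 'a set) \<Rightarrow> bool" where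
  "complete_filtration sm F \<longleftrightarrow>
     F 0 = UNIV \<and>
     (\<forall>n. F (Suc n) \<subseteq> F n) \<and>
     (\<forall>n. 0 \<in> F n \<and> (\<forall>x\<in>F n. \<forall>y\<in>F n. x + y \<in> F n) \<and> (\<forall>c. \<forall>x\<in>F n. sm c x \<in> F n)) \<and>
     (\<Inter>n. F n) = {0} \<and>
     (\<forall>s. (\<forall>n. s (Suc n) - s n \<in> F n) \<longrightarrow> (\<exists>x. \<forall>n. x - s n \<in> F n))"

text \<open>Complete filtered associative K-algebra (not necessarily unital): 'a is a ring.\<close>

definition complete_filtered_assoc_algebra ::
  "('k::field \<Rightarrow> 'a::ring \<Rightarrow> 'a) \<Rightarrow> (nat \<Rightarrow> 'a set) \<Rightarrow> bool" where
  "complete_filtered_assoc_algebra sm F \<longleftrightarrow>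
     K_vector_space sm \<and>
     (\<forall>c x y. sm c (x * y) = sm c x * y \<and> sm c (x * y) = x * sm c y) \<and>
     complete_filtration sm F \<and>
     (\<forall>m n. \<forall>x\<in>F m. \<forall>y\<in>F n. x * y \<in> F (m + n))"

definition complete_filtered_Lie_algebra ::
  "('k::field \<Rightarrow> 'a::ab_group_add \<Rightarrow> 'a) \<Rightarrow> ('a \<Rightarrow> 'a \<Rightarrow> 'a) \<Rightarrow> (nat \<Rightarrow> 'a set) \<Rightarrow> bool" where
  "complete_filtered_Lie_algebra sm br F \<longleftrightarrow>
     K_vector_space sm \<and>
     (\<forall>x y z. br (x + y) z = br x z + br y z) \<and>
     (\<forall>x y z. br x (y + z) = br x y + br x z) \<and>
     (\<forall>c x y. br (sm c x) y = sm c (br x y) \<and> br x (sm c y) = sm c (br x y)) \<and>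
     (\<forall>x. br x x = 0) \<and>
     (\<forall>x y z. br x (br y z) + br y (br z x) + br z (br x y) = 0) \<and>
     complete_filtration sm F \<and>
     (\<forall>m n. \<forall>x\<in>F m. \<forall>y\<in>F n. br x y \<in> F (m + n))"

definition K_linear :: "('k::field \<Rightarrow> 'a::ab_group_add \<Rightarrow> 'a) \<Rightarrow> ('a \<Rightarrow> 'a) \<Rightarrow> bool" where
  "K_linear sm Q \<longleftrightarrow> (\<forall>x y. Q (x + y) = Q x + Q y) \<and> (\<forall>c x. Q (sm c x) = sm c (Q x))"

definition filtration_preserving :: "(nat \<Rightarrow> 'a set) \<Rightarrow> ('a \<Rightarrow> 'a) \<Rightarrow> bool" where
  "filtration_preserving F Q \<longleftrightarrow> (\<forall>n. \<forall>x\<in>F n. Q x \<in> F n)"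

definition flim :: "(nat \<Rightarrow> 'a::ab_group_add set) \<Rightarrow> (nat \<Rightarrow> 'a) \<Rightarrow> 'a \<Rightarrow> bool" where
  "flim F s L \<longleftrightarrow> (\<forall>m. \<exists>N. \<forall>n\<ge>N. s n - L \<in> F m)"

definition fsum :: "(nat \<Rightarrow> 'a::ab_group_add set) \<Rightarrow> (nat \<Rightarrow> 'a) \<Rightarrow> 'a" where
  "fsum F f = (THE L. flim F (\<lambda>n. \<Sum>i<n. f i) L)"

text \<open>pw x n = x^(n+1) (no unit needed).\<close>
primrec pw :: "'a::times \<Rightarrow> nat \<Rightarrow> 'a" where
  "pw x 0 = x"
| "pw x (Suc n) = x * pw x n"

text \<open>expm1 x = exp(x) - 1 = sum_{n>=1} x^n/n!. Since exp(x) = 1 + expm1 x (in the unitization),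
  exp(x) exp(y) = 1 + expm1 x + expm1 y + expm1 x * expm1 y.\<close>
definition expm1 :: "('k::field_char_0 \<Rightarrow> 'a::ring \<Rightarrow> 'a) \<Rightarrow> (nat \<Rightarrow> 'a set) \<Rightarrow> 'a \<Rightarrow> 'a" where
  "expm1 sm F x = fsum F (\<lambda>n. sm (inverse (of_nat (fact (Suc n)))) (pw x n))"

definition expprod_m1 :: "('k::field_char_0 \<Rightarrow> 'a::ring \<Rightarrow> 'a) \<Rightarrow> (nat \<Rightarrow> 'a set) \<Rightarrow> 'a \<Rightarrow> 'a \<Rightarrow> 'a" where
  "expprod_m1 sm F x y = expm1 sm F x + expm1 sm F y + expm1 sm F x * expm1 sm F y"

text \<open>BCH(x,y) for x, y in A_1: the element z of A_1 with exp(x) exp(y) = exp(x + y + z).\<close>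
definition assoc_BCH :: "('k::field_char_0 \<Rightarrow> 'a::ring \<Rightarrow> 'a) \<Rightarrow> (nat \<Rightarrow> 'a set) \<Rightarrow> 'a \<Rightarrow> 'a \<Rightarrow> 'a" where
  "assoc_BCH sm F x y = (THE z. z \<in> F 1 \<and> expm1 sm F (x + y + z) = expprod_m1 sm F x y)"

text \<open>Right-nested bracket of a word in the letters x (True) and y (False):
  [w1 w2 ... wk] = [w1,[w2,[...,wk]]].\<close>
fun lie_word :: "('a::zero \<Rightarrow> 'a \<Rightarrow> 'a) \<Rightarrow> 'a \<Rightarrow> 'a \<Rightarrow> bool list \<Rightarrow> 'a" where
  "lie_word br x y [] = 0"
| "lie_word br x y [b] = (if b then x else y)"
| "lie_word br x y (b # c # w) = br (if b then x else y) (lie_word br x y (c # w))"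

text \<open>Homogeneous component of total degree N of Dynkin's series for log(exp x exp y):
  sum over n and (r_i,s_i) with r_i+s_i>0, sum (r_i+s_i) = N of
  (-1)^(n-1)/(n N prod r_i! s_i!) [x^r1 y^s1 ... x^rn y^sn].\<close>
definition dynkin_deg :: "('k::field_char_0 \<Rightarrow> 'a::ab_group_add \<Rightarrow> 'a) \<Rightarrow> ('a \<Rightarrow> 'a \<Rightarrow> 'a) \<Rightarrow> 'a \<Rightarrow> 'a \<Rightarrow> nat \<Rightarrow> 'a" where
  "dynkin_deg sm br x y N =
     (\<Sum>n\<in>{1..N}. \<Sum>ps\<in>{ps :: (nat \<times> nat) list. length ps = n \<and> (\<forall>p\<in>set ps. 0 < fst p + snd p)
                         \<and> sum_list (map (\<lambda>p. fst p + snd p) ps) = N}.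
        sm ((- 1) ^ (n - 1) / (of_nat n * of_nat N *
              of_nat (prod_list (map (\<lambda>p. fact (fst p) * fact (snd p)) ps))))
           (lie_word br x y (concat (map (\<lambda>p. replicate (fst p) True @ replicate (snd p) False) ps))))"

definition Lie_BCH :: "('k::field_char_0 \<Rightarrow> 'a::ab_group_add \<Rightarrow> 'a) \<Rightarrow> ('a \<Rightarrow> 'a \<Rightarrow> 'a) \<Rightarrow> (nat \<Rightarrow> 'a set) \<Rightarrow> 'a \<Rightarrow> 'a \<Rightarrow> 'a" where
  "Lie_BCH sm br F x y = fsum F (\<lambda>N. dynkin_deg sm br x y (Suc N)) - x - y"

definition Cop :: "('a \<Rightarrow> 'a \<Rightarrow> 'a) \<Rightarrow> 'a::ab_group_add \<Rightarrow> 'a \<Rightarrow> 'a" where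
  "Cop bch u v = u + v + bch u v"

definition bch_chi :: "(nat \<Rightarrow> 'a::ab_group_add set) \<Rightarrow> ('a \<Rightarrow> 'a \<Rightarrow> 'a) \<Rightarrow> ('a \<Rightarrow> 'a) \<Rightarrow> 'a \<Rightarrow> 'a" where
  "bch_chi F bch Q a = (THE b. b \<in> F 1 \<and> b = a - bch (Q b) (b - Q b))"

definition compl_proj :: "('a \<Rightarrow> 'a) \<Rightarrow> 'a::ab_group_add \<Rightarrow> 'a" where
  "compl_proj P x = x - P x"

definition A1_minus :: "(nat \<Rightarrow> 'a set) \<Rightarrow> ('a \<Rightarrow> 'a) \<Rightarrow> 'a set" where
  "A1_minus F P = P ` F 1"

definition A1_plus :: "(nat \<Rightarrow> 'a::ab_group_add set) \<Rightarrow> ('a \<Rightarrow> 'a) \<Rightarrow> 'a set" where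
  "A1_plus F P = compl_proj P ` F 1"

end

theory Submission
  imports Defs
begin


locale filt =
  fixes F :: "nat \<Rightarrow> 'a::ab_group_add set"
  assumes F0: "F 0 = UNIV"
  and Fdec: "\<And>n. F (Suc n) \<subseteq> F n"
  and Fzero: "\<And>n. 0 \<in> F n"
  and Fadd: "\<And>n x y. x \<in> F n \<Longrightarrow> y \<in> F n \<Longrightarrow> x + y \<in> F n"
  and Fneg: "\<And>n x. x \<in> F n \<Longrightarrow> - x \<in> F n"
  and Fhaus: "(\<Inter>n. F n) = {0}"
  and Fcompl: "\<And>s. (\<forall>n. s (Suc n) - s n \<in> F n) \<Longrightarrow> \<exists>x. \<forall>n. x - s n \<in> F n"
begin

lemma Fdiff: "x \<in> F n \<Longrightarrow> y \<in> F n \<Longrightarrow> x - y \<in> F n"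
  using Fadd[of x n "-y"] Fneg[of y n] by simp

lemma Fmono': "m \<le> n \<Longrightarrow> F n \<subseteq> F m"
proof (induction n rule: dec_induct)
  case base then show ?case by simp
next
  case (step k) then show ?case using Fdec[of k] by blast
qed

lemma Fmono: "m \<le> n \<Longrightarrow> x \<in> F n \<Longrightarrow> x \<in> F m"
  using Fmono' by blast

lemma Fsum: "(\<And>i. i \<in> A \<Longrightarrow> f i \<in> F n) \<Longrightarrow> sum f A \<in> F n"
  by (induction A rule: infinite_finite_induct) (auto simp: Fzero Fadd)

lemma Fall_zero: "(\<And>n. x \<in> F n) \<Longrightarrow> x = 0"
  using Fhaus by blast

lemma Fall_zero1:
  assumes "x \<in> F 1" "\<And>n. n \<ge> 1 \<Longrightarrow> x \<in> F n \<Longrightarrow> x \<in> F (Suc n)"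
  shows "x = 0"
proof -
  have "x \<in> F n" for n
  proof (induction n)
    case 0 then show ?case using F0 by simp
  next
    case (Suc n) then show ?case using assms by (cases "n = 0") auto
  qed
  then show ?thesis using Fall_zero by blast
qed

lemma fixpt:
  assumes T1: "\<And>b. b \<in> F 1 \<Longrightarrow> T b \<in> F 1"
  and Tc: "\<And>n b b'. n \<ge> 1 \<Longrightarrow> b \<in> F 1 \<Longrightarrow> b' \<in> F 1 \<Longrightarrow> b - b' \<in> F n \<Longrightarrow> T b - T b' \<in> F (Suc n)"
  shows "\<exists>!b. b \<in> F 1 \<and> b = T b"
proof -
  define s where "s k = (T ^^ k) 0" for k
  have sS: "s (Suc k) = T (s k)" for k by (simp add: s_def)
  have s1: "s k \<in> F 1" for k
  proof (induction k)
    case 0 then show ?case by (simp add: s_def Fzero)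
  next
    case (Suc k) then show ?case unfolding sS by (rule T1)
  qed
  have sd: "s (Suc k) - s k \<in> F (Suc k)" for k
  proof (induction k)
    case 0 then show ?case using T1[OF Fzero[of 1]] by (simp add: s_def)
  next
    case (Suc k)
    have "T (s (Suc k)) - T (s k) \<in> F (Suc (Suc k))"
      by (rule Tc) (use Suc s1 in auto)
    then show ?case by (simp add: sS)
  qed
  have "\<forall>n. s (Suc n) - s n \<in> F n" using sd Fdec by blast
  then obtain x where x: "\<And>n. x - s n \<in> F n" using Fcompl by blast
  have x1: "x \<in> F 1" using Fadd[OF x[of 1] s1[of 1]] by simp
  have d: "T x - x \<in> F n" if "n \<ge> 1" for n
  proof -
    have a: "T x - T (s n) \<in> F (Suc n)" by (rule Tc) (use that x x1 s1 in auto)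
    have b: "s (Suc n) - x \<in> F (Suc n)" using Fneg[OF x[of "Suc n"]] by simp
    have "T x - x = (T x - T (s n)) + (s (Suc n) - x)" by (simp add: sS)
    also have "\<dots> \<in> F (Suc n)" using a b Fadd by blast
    finally show ?thesis using Fdec by blast
  qed
  have "T x - x \<in> F n" for n using d[of n] F0 by (cases "n = 0") auto
  then have fx: "x = T x" using Fall_zero[of "T x - x"] by simp
  show ?thesis
  proof (rule ex1I[of _ x])
    show "x \<in> F 1 \<and> x = T x" using x1 fx by simp
  next
    fix b assume b: "b \<in> F 1 \<and> b = T b"
    have "b - x = 0"
    proof (rule Fall_zero1)
      show "b - x \<in> F 1" using b x1 Fdiff by blast
      fix n assume "n \<ge> 1" "b - x \<in> F n"
      then have "T b - T x \<in> F (Suc n)" using Tc b x1 by blast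
      then show "b - x \<in> F (Suc n)" using b fx by simp
    qed
    then show "b = x" by simp
  qed
qed

lemma flim_unique:
  assumes "flim F s L" "flim F s L'" shows "L = L'"
proof -
  have "L' - L \<in> F m" for m
  proof -
    obtain N1 where N1: "\<And>n. n \<ge> N1 \<Longrightarrow> s n - L \<in> F m" using assms(1) unfolding flim_def by blast
    obtain N2 where N2: "\<And>n. n \<ge> N2 \<Longrightarrow> s n - L' \<in> F m" using assms(2) unfolding flim_def by blast
    have "L' - L = (s (max N1 N2) - L) - (s (max N1 N2) - L')" by simp
    also have "\<dots> \<in> F m" by (rule Fdiff) (use N1[of "max N1 N2"] N2[of "max N1 N2"] in auto)
    finally show ?thesis .
  qed
  then show ?thesis using Fall_zero[of "L' - L"] by simp
qed

lemma fsum_eq: "flim F (\<lambda>n. \<Sum>i<n. f i) L \<Longrightarrow> fsum F f = L"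
  unfolding fsum_def using flim_unique by blast

lemma fsum_conv:
  assumes "\<And>i. f i \<in> F i"
  shows "flim F (\<lambda>n. \<Sum>i<n. f i) (fsum F f)"
proof -
  have "\<forall>n. (\<Sum>i<Suc n. f i) - (\<Sum>i<n. f i) \<in> F n" using assms by simp
  then obtain x where x: "\<And>n. x - (\<Sum>i<n. f i) \<in> F n" using Fcompl[of "\<lambda>n. \<Sum>i<n. f i"] by blast
  have "flim F (\<lambda>n. \<Sum>i<n. f i) x"
    unfolding flim_def
  proof
    fix m show "\<exists>N. \<forall>n\<ge>N. (\<Sum>i<n. f i) - x \<in> F m"
      using Fmono Fneg[OF x] by (intro exI[of _ m]) (metis minus_diff_eq)
  qed
  then show ?thesis using fsum_eq by simp
qed

lemma fsum_zero: "fsum F (\<lambda>_. 0) = 0"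
  by (rule fsum_eq) (simp add: flim_def Fzero)

lemma fsum_diff:
  assumes f: "\<And>i. f i \<in> F i" and g: "\<And>i. g i \<in> F i"
  and fg: "\<And>i. i \<ge> 1 \<Longrightarrow> f i - g i \<in> F m"
  shows "fsum F f - fsum F g - (f 0 - g 0) \<in> F m"
proof -
  obtain N1 where N1: "\<And>n. n \<ge> N1 \<Longrightarrow> (\<Sum>i<n. f i) - fsum F f \<in> F m"
    using fsum_conv[OF f] unfolding flim_def by blast
  obtain N2 where N2: "\<And>n. n \<ge> N2 \<Longrightarrow> (\<Sum>i<n. g i) - fsum F g \<in> F m"
    using fsum_conv[OF g] unfolding flim_def by blast
  define K where "K = max N1 N2"
  have a: "(\<Sum>i<Suc K. f i) - fsum F f \<in> F m" by (rule N1) (simp add: K_def)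
  have b: "(\<Sum>i<Suc K. g i) - fsum F g \<in> F m" by (rule N2) (simp add: K_def)
  have c: "(\<Sum>i<K. f (Suc i) - g (Suc i)) \<in> F m" by (rule Fsum) (use fg in auto)
  have e: "(\<Sum>i<Suc K. f i) - (\<Sum>i<Suc K. g i) = (f 0 - g 0) + (\<Sum>i<K. f (Suc i) - g (Suc i))"
    unfolding sum.lessThan_Suc_shift sum_subtractf by simp
  have "fsum F f - fsum F g - (f 0 - g 0) = (\<Sum>i<K. f (Suc i) - g (Suc i)) - ((\<Sum>i<Suc K. f i) - fsum F f) + ((\<Sum>i<Suc K. g i) - fsum F g)"
    using e by (simp add: algebra_simps)
  also have "\<dots> \<in> F m" using a b c Fadd Fdiff by blast
  finally show ?thesis .
qed

end


locale bchc = filt F for F :: "nat \<Rightarrow> 'a::ab_group_add set" +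
  fixes B :: "'a \<Rightarrow> 'a \<Rightarrow> 'a" and P :: "'a \<Rightarrow> 'a"
  assumes B1: "\<And>x y. x \<in> F 1 \<Longrightarrow> y \<in> F 1 \<Longrightarrow> B x y \<in> F 1"
  and Bc: "\<And>n x y x' y'. n \<ge> 1 \<Longrightarrow> x \<in> F 1 \<Longrightarrow> y \<in> F 1 \<Longrightarrow> x' \<in> F 1 \<Longrightarrow> y' \<in> F 1
      \<Longrightarrow> x - x' \<in> F n \<Longrightarrow> y - y' \<in> F n \<Longrightarrow> B x y - B x' y' \<in> F (Suc n)"
  and Padd: "\<And>x y. P (x + y) = P x + P y"
  and Pidem: "\<And>x. P (P x) = P x"
  and Pfilt: "\<And>n x. x \<in> F n \<Longrightarrow> P x \<in> F n"
begin

lemma P0: "P 0 = 0" using Padd[of 0 0] by simp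
lemma Pneg: "P (- x) = - P x" using Padd[of x "-x"] P0 by (simp add: eq_neg_iff_add_eq_0 add.commute)
lemma Pdiff: "P (x - y) = P x - P y" using Padd[of x "-y"] Pneg by simp

lemma Cop1: "u \<in> F 1 \<Longrightarrow> v \<in> F 1 \<Longrightarrow> Cop B u v \<in> F 1"
  unfolding Cop_def by (intro Fadd B1)

lemma chi_fix:
  assumes a: "a \<in> F 1"
  shows "\<exists>!b. b \<in> F 1 \<and> b = a - B (P b) (b - P b)"
proof (rule fixpt)
  fix b assume "b \<in> F 1"
  then show "a - B (P b) (b - P b) \<in> F 1" using a B1 Pfilt Fdiff by blast
next
  fix n b b' assume n: "n \<ge> 1" and b: "b \<in> F 1" "b' \<in> F 1" "b - b' \<in> F n"
  have "B (P b) (b - P b) - B (P b') (b' - P b') \<in> F (Suc n)"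
  proof (rule Bc)
    show "P b - P b' \<in> F n" using b Pfilt Pdiff by metis
    moreover have "b - P b - (b' - P b') = (b - b') - (P b - P b')" by (simp add: algebra_simps)
    ultimately show "b - P b - (b' - P b') \<in> F n" using b Fdiff by metis
  qed (use n b Pfilt Fdiff in auto)
  then have "- (B (P b) (b - P b) - B (P b') (b' - P b')) \<in> F (Suc n)" by (rule Fneg)
  then show "a - B (P b) (b - P b) - (a - B (P b') (b' - P b')) \<in> F (Suc n)" by simp
qed

lemma chi_spec:
  assumes "a \<in> F 1"
  shows "bch_chi F B P a \<in> F 1 \<and> bch_chi F B P a = a - B (P (bch_chi F B P a)) (bch_chi F B P a - P (bch_chi F B P a))"
  unfolding bch_chi_def using theI'[OF chi_fix[OF assms]] .

lemma chi_unique: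
  assumes "a \<in> F 1" "b \<in> F 1" "b = a - B (P b) (b - P b)"
  shows "bch_chi F B P a = b"
  unfolding bch_chi_def using the1_equality[OF chi_fix[OF assms(1)]] assms by blast

lemma chi_inj: "inj_on (bch_chi F B P) (F 1)"
proof (rule inj_onI)
  fix a a' assume "a \<in> F 1" "a' \<in> F 1" "bch_chi F B P a = bch_chi F B P a'"
  then show "a = a'" using chi_spec[of a] chi_spec[of a']
    by (metis (no_types, lifting) eq_diff_eq)
qed

lemma Am: "u \<in> A1_minus F P \<Longrightarrow> u \<in> F 1 \<and> P u = u"
  unfolding A1_minus_def using Pfilt Pidem by auto
lemma Ap: "v \<in> A1_plus F P \<Longrightarrow> v \<in> F 1 \<and> P v = 0"
  unfolding A1_plus_def compl_proj_def using Pfilt Pidem Fdiff Pdiff by auto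
lemma toAm: "b \<in> F 1 \<Longrightarrow> P b \<in> A1_minus F P"
  unfolding A1_minus_def by auto
lemma toAp: "b \<in> F 1 \<Longrightarrow> compl_proj P b \<in> A1_plus F P"
  unfolding A1_plus_def by auto

lemma Cm_inv:
  assumes "u \<in> A1_minus F P" "v \<in> A1_plus F P"
  shows "bch_chi F B P (Cop B u v) = u + v"
proof (rule chi_unique)
  show "Cop B u v \<in> F 1" by (rule Cop1) (use Am Ap assms in auto)
  show "u + v \<in> F 1" using Am Ap assms Fadd by blast
  have "P (u + v) = u" using Am Ap assms Padd by simp
  then show "u + v = Cop B u v - B (P (u + v)) (u + v - P (u + v))"
    by (simp add: Cop_def)
qed

lemma main_gen:
  "bij_betw (\<lambda>(u, v). Cop B u v) (A1_minus F P \<times> A1_plus F P) (F 1)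
   \<and> (\<forall>a\<in>F 1. the_inv_into (A1_minus F P \<times> A1_plus F P) (\<lambda>(u, v). Cop B u v) a
         = (P (bch_chi F B P a), compl_proj P (bch_chi F B P a)))"
proof -
  let ?Cm = "\<lambda>(u, v). Cop B u v"
  let ?A = "A1_minus F P \<times> A1_plus F P"
  have inj: "inj_on ?Cm ?A"
  proof (rule inj_onI, clarify)
    fix u v u' v' assume h: "u \<in> A1_minus F P" "v \<in> A1_plus F P" "u' \<in> A1_minus F P" "v' \<in> A1_plus F P"
      "Cop B u v = Cop B u' v'"
    then have "u + v = u' + v'" using Cm_inv by metis
    then have "P (u + v) = P (u' + v')" by simp
    then have "u = u'" using h Am Ap Padd by simp
    then show "u = u' \<and> v = v'" using \<open>u + v = u' + v'\<close> by simp
  qed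
  have pre: "?Cm (P (bch_chi F B P a), compl_proj P (bch_chi F B P a)) = a"
    and mem: "(P (bch_chi F B P a), compl_proj P (bch_chi F B P a)) \<in> ?A"
    if a: "a \<in> F 1" for a
  proof -
    let ?b = "bch_chi F B P a"
    show "?Cm (P ?b, compl_proj P ?b) = a"
      using chi_spec[OF a] unfolding Cop_def compl_proj_def by (simp add: algebra_simps)
    show "(P ?b, compl_proj P ?b) \<in> ?A" using chi_spec[OF a] toAm toAp by blast
  qed
  have img: "?Cm ` ?A = F 1"
  proof
    show "?Cm ` ?A \<subseteq> F 1" using Am Ap Cop1 by auto
    show "F 1 \<subseteq> ?Cm ` ?A" using pre mem by (metis image_eqI subsetI)
  qed
  have bij: "bij_betw ?Cm ?A (F 1)" using inj img by (simp add: bij_betw_def)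
  moreover have "\<forall>a\<in>F 1. the_inv_into ?A ?Cm a = (P (bch_chi F B P a), compl_proj P (bch_chi F B P a))"
    using the_inv_into_f_eq[OF inj] pre mem by blast
  ultimately show ?thesis by blast
qed

lemma compl_bchc: "bchc F B (compl_proj P)"
proof (intro bchc.intro bchc_axioms.intro)
  show "filt F" by (rule filt_axioms)
  show "compl_proj P (x + y) = compl_proj P x + compl_proj P y" for x y
    by (simp add: compl_proj_def Padd)
  show "compl_proj P (compl_proj P x) = compl_proj P x" for x
    by (simp add: compl_proj_def Pdiff Pidem)
  show "x \<in> F n \<Longrightarrow> compl_proj P x \<in> F n" for n x
    by (simp add: compl_proj_def Pfilt Fdiff)
  show "x \<in> F 1 \<Longrightarrow> y \<in> F 1 \<Longrightarrow> B x y \<in> F 1" for x y by (rule B1)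
  show "B x y - B x' y' \<in> F (Suc n)" if "1 \<le> n" "x \<in> F 1" "y \<in> F 1" "x' \<in> F 1" "y' \<in> F 1"
       "x - x' \<in> F n" "y - y' \<in> F n" for n x y x' y' using Bc that by blast
qed

lemma cc: "compl_proj (compl_proj P) = P"
  by (simp add: compl_proj_def fun_eq_iff)

lemma psi:
  assumes Einj: "inj_on E (F 1)" and R: "\<And>u v. u \<in> F 1 \<Longrightarrow> v \<in> F 1 \<Longrightarrow> R u v = E (Cop B u v)"
  shows "\<exists>\<Psi>. bij_betw \<Psi> (A1_plus F P \<times> A1_minus F P) (A1_minus F P \<times> A1_plus F P)
           \<and> (\<forall>ap\<in>A1_plus F P. \<forall>am\<in>A1_minus F P. R ap am = R (fst (\<Psi> (ap, am))) (snd (\<Psi> (ap, am))))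
           \<and> (\<forall>\<Phi>. bij_betw \<Phi> (A1_plus F P \<times> A1_minus F P) (A1_minus F P \<times> A1_plus F P)
                 \<and> (\<forall>ap\<in>A1_plus F P. \<forall>am\<in>A1_minus F P. R ap am = R (fst (\<Phi> (ap, am))) (snd (\<Phi> (ap, am))))
                 \<longrightarrow> (\<forall>a\<in>A1_plus F P \<times> A1_minus F P. \<Phi> a = \<Psi> a))
           \<and> (\<forall>ap\<in>A1_plus F P. \<forall>am\<in>A1_minus F P.
                 \<Psi> (ap, am) = (P (bch_chi F B P (Cop B ap am)), compl_proj P (bch_chi F B P (Cop B ap am)))
               \<and> \<Psi> (ap, am) = (P (bch_chi F B P (the_inv_into (F 1) (bch_chi F B (compl_proj P)) (ap + am))),
                                compl_proj P (bch_chi F B P (the_inv_into (F 1) (bch_chi F B (compl_proj P)) (ap + am)))))"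
proof -
  let ?Am = "A1_minus F P" and ?Ap = "A1_plus F P"
  let ?Cm = "\<lambda>(u, v). Cop B u v"
  interpret C: bchc F B "compl_proj P" by (rule compl_bchc)
  have AmC: "A1_minus F (compl_proj P) = ?Ap" by (simp add: A1_minus_def A1_plus_def)
  have ApC: "A1_plus F (compl_proj P) = ?Am" by (simp add: A1_minus_def A1_plus_def cc)
  have bijC: "bij_betw ?Cm (?Ap \<times> ?Am) (F 1)" using C.main_gen AmC ApC by simp
  define D where "D a = (P (bch_chi F B P a), compl_proj P (bch_chi F B P a))" for a
  have mg: "bij_betw ?Cm (?Am \<times> ?Ap) (F 1)"
    "\<And>a. a \<in> F 1 \<Longrightarrow> the_inv_into (?Am \<times> ?Ap) ?Cm a = D a"
    using main_gen D_def by auto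
  have bijD: "bij_betw D (F 1) (?Am \<times> ?Ap)"
    using bij_betw_the_inv_into[OF mg(1)] bij_betw_cong[of "F 1" "the_inv_into (?Am \<times> ?Ap) ?Cm" D] mg(2)
    by simp
  have CD: "?Cm (D a) = a" if "a \<in> F 1" for a
    using f_the_inv_into_f_bij_betw[OF mg(1), of a] that mg(2)[OF that] by simp
  define \<Psi> where "\<Psi> = D \<circ> ?Cm"
  have bijPsi: "bij_betw \<Psi> (?Ap \<times> ?Am) (?Am \<times> ?Ap)"
    unfolding \<Psi>_def using bijC bijD by (rule bij_betw_trans)
  have Psi_eq: "\<Psi> (ap, am) = D (Cop B ap am)" for ap am by (simp add: \<Psi>_def)
  have Cop_Psi: "Cop B (fst (\<Psi> (ap, am))) (snd (\<Psi> (ap, am))) = Cop B ap am"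
    if "ap \<in> ?Ap" "am \<in> ?Am" for ap am
  proof -
    have "Cop B ap am \<in> F 1" by (rule Cop1) (use that Am Ap in auto)
    then have e: "(case D (Cop B ap am) of (u, v) \<Rightarrow> Cop B u v) = Cop B ap am" by (rule CD)
    show ?thesis unfolding Psi_eq using e by (cases "D (Cop B ap am)") simp
  qed
  have PsiA: "\<Psi> a \<in> ?Am \<times> ?Ap" if "a \<in> ?Ap \<times> ?Am" for a
    by (rule bij_betw_apply[OF bijPsi that])
  have Rok: "\<forall>ap\<in>?Ap. \<forall>am\<in>?Am. R ap am = R (fst (\<Psi> (ap, am))) (snd (\<Psi> (ap, am)))"
  proof (intro ballI)
    fix ap am assume h: "ap \<in> ?Ap" "am \<in> ?Am"
    have "fst (\<Psi> (ap, am)) \<in> F 1" "snd (\<Psi> (ap, am)) \<in> F 1" using PsiA[of "(ap, am)"] h Am Ap by auto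
    moreover have "ap \<in> F 1" "am \<in> F 1" using h Am Ap by auto
    ultimately show "R ap am = R (fst (\<Psi> (ap, am))) (snd (\<Psi> (ap, am)))"
      using R Cop_Psi[OF h] by simp
  qed
  have uniq: "\<forall>a\<in>?Ap \<times> ?Am. \<Phi> a = \<Psi> a"
    if hb: "bij_betw \<Phi> (?Ap \<times> ?Am) (?Am \<times> ?Ap)"
    and hR: "\<forall>ap\<in>?Ap. \<forall>am\<in>?Am. R ap am = R (fst (\<Phi> (ap, am))) (snd (\<Phi> (ap, am)))" for \<Phi>
  proof (clarify)
    fix ap am assume h: "ap \<in> ?Ap" "am \<in> ?Am"
    have PhiA: "\<Phi> (ap, am) \<in> ?Am \<times> ?Ap" using h by (intro bij_betw_apply[OF hb]) auto
    then have f1: "fst (\<Phi> (ap, am)) \<in> F 1" "snd (\<Phi> (ap, am)) \<in> F 1" using Am Ap by auto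
    have f2: "ap \<in> F 1" "am \<in> F 1" using h Am Ap by auto
    have "E (Cop B ap am) = E (Cop B (fst (\<Phi> (ap, am))) (snd (\<Phi> (ap, am))))"
      using hR h R[OF f2] R[OF f1] by simp
    then have "Cop B ap am = Cop B (fst (\<Phi> (ap, am))) (snd (\<Phi> (ap, am)))"
      by (rule inj_onD[OF Einj _ Cop1[OF f2] Cop1[OF f1]])
    then have "?Cm (\<Phi> (ap, am)) = ?Cm (\<Psi> (ap, am))"
      using Cop_Psi[OF h] by (cases "\<Phi> (ap, am)"; cases "\<Psi> (ap, am)") simp
    then show "\<Phi> (ap, am) = \<Psi> (ap, am)"
      by (rule inj_onD[OF bij_betw_imp_inj_on[OF mg(1)]]) (use PhiA PsiA h in auto)
  qed
  have form: "the_inv_into (F 1) (bch_chi F B (compl_proj P)) (ap + am) = Cop B ap am"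
    if h: "ap \<in> ?Ap" "am \<in> ?Am" for ap am
  proof (rule the_inv_into_f_eq[OF C.chi_inj])
    show "Cop B ap am \<in> F 1" by (rule Cop1) (use h Am Ap in auto)
    have "bch_chi F B (compl_proj P) (Cop B ap am) = ap + am"
      by (rule C.Cm_inv) (use h AmC ApC in auto)
    then show "bch_chi F B (compl_proj P) (Cop B ap am) = ap + am" by simp
  qed
  show ?thesis
    apply (rule exI[of _ \<Psi>])
    apply (intro conjI)
       apply (rule bijPsi)
      apply (rule Rok)
    using uniq apply blast
    using form apply (simp add: Psi_eq D_def)
    done
qed

end


lemma KV_facts:
  assumes "K_vector_space sm"
  shows sm_zero: "sm c 0 = 0" and sm_diff: "sm c (x - y) = sm c x - sm c y"
    and sm_neg1: "sm (-1) x = - x" and sm_one: "sm 1 x = x"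
proof -
  have add: "sm c (a + b) = sm c a + sm c b" for c a b using assms unfolding K_vector_space_def by blast
  have sadd: "sm (c + d) a = sm c a + sm d a" for c d a using assms unfolding K_vector_space_def by blast
  show one: "sm 1 x = x" using assms unfolding K_vector_space_def by blast
  show z: "sm c 0 = 0" using add[of c 0 0] by simp
  show "sm c (x - y) = sm c x - sm c y" using add[of c "x - y" y] by (simp add: eq_diff_eq)
  have "sm 0 x = 0" using sadd[of 0 0 x] by simp
  then have "sm (-1) x + x = 0" using sadd[of "-1" 1 x] one by simp
  then show "sm (-1) x = - x" by (simp add: eq_neg_iff_add_eq_0)
qed

lemma filt_of:
  assumes "K_vector_space sm" "complete_filtration sm F"
  shows "filt F"
proof -
  have c1: "F 0 = UNIV" and c2: "\<forall>n. F (Suc n) \<subseteq> F n"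
    and c3: "\<forall>n. 0 \<in> F n \<and> (\<forall>x\<in>F n. \<forall>y\<in>F n. x + y \<in> F n) \<and> (\<forall>c. \<forall>x\<in>F n. sm c x \<in> F n)"
    and c4: "(\<Inter>n. F n) = {0}"
    and c5: "\<forall>s. (\<forall>n. s (Suc n) - s n \<in> F n) \<longrightarrow> (\<exists>x. \<forall>n. x - s n \<in> F n)"
    using assms(2) unfolding complete_filtration_def by auto
  show ?thesis
  proof
    show "F 0 = UNIV" by (rule c1)
    show "F (Suc n) \<subseteq> F n" for n using c2 by blast
    show "0 \<in> F n" for n using c3 by blast
    show "x \<in> F n \<Longrightarrow> y \<in> F n \<Longrightarrow> x + y \<in> F n" for n x y using c3 by blast
    show "- x \<in> F n" if "x \<in> F n" for n x
    proof -
      have "sm (-1) x \<in> F n" using c3 that by blast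
      then show ?thesis using sm_neg1[OF assms(1), of x] by simp
    qed
    show "(\<Inter>n. F n) = {0}" by (rule c4)
    show "(\<forall>n. s (Suc n) - s n \<in> F n) \<Longrightarrow> \<exists>x. \<forall>n. x - s n \<in> F n" for s using c5 by blast
  qed
qed

locale assoc =
  fixes sm :: "'k::field_char_0 \<Rightarrow> 'a::ring \<Rightarrow> 'a" and F :: "nat \<Rightarrow> 'a set"
  assumes CA: "complete_filtered_assoc_algebra sm F"

sublocale assoc \<subseteq> filt F
  using CA filt_of unfolding complete_filtered_assoc_algebra_def by blast

context assoc
begin

lemma KV: "K_vector_space sm"
  using CA unfolding complete_filtered_assoc_algebra_def by (rule conjunct1)
lemma CF: "complete_filtration sm F"
  using CA unfolding complete_filtered_assoc_algebra_def by (elim conjE)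
lemma smF: "x \<in> F n \<Longrightarrow> sm c x \<in> F n"
proof -
  assume x: "x \<in> F n"
  have "\<forall>n. 0 \<in> F n \<and> (\<forall>x\<in>F n. \<forall>y\<in>F n. x + y \<in> F n) \<and> (\<forall>c. \<forall>x\<in>F n. sm c x \<in> F n)"
    using CF unfolding complete_filtration_def by (elim conjE)
  then show ?thesis using x by blast
qed
lemma mulF: "x \<in> F m \<Longrightarrow> y \<in> F n \<Longrightarrow> x * y \<in> F (m + n)"
proof -
  assume xy: "x \<in> F m" "y \<in> F n"
  have "\<forall>m n. \<forall>x\<in>F m. \<forall>y\<in>F n. x * y \<in> F (m + n)"
    using CA unfolding complete_filtered_assoc_algebra_def by (elim conjE)
  then show ?thesis using xy by blast
qed

lemma pw1: "x \<in> F 1 \<Longrightarrow> pw x k \<in> F (Suc k)"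
proof (induction k)
  case 0 then show ?case by simp
next
  case (Suc k) then show ?case using mulF[of x 1 "pw x k" "Suc k"] by simp
qed

lemma pwd:
  assumes x: "x \<in> F 1" "x' \<in> F 1" "x - x' \<in> F n"
  shows "pw x k - pw x' k \<in> F (n + k)"
proof (induction k)
  case 0 then show ?case using x by simp
next
  case (Suc k)
  have e: "pw x (Suc k) - pw x' (Suc k) = (x - x') * pw x k + x' * (pw x k - pw x' k)"
    by (simp add: algebra_simps)
  have a: "(x - x') * pw x k \<in> F (n + Suc k)" using mulF[OF x(3) pw1[OF x(1)]] by simp
  have b: "x' * (pw x k - pw x' k) \<in> F (n + Suc k)" using mulF[OF x(2) Suc] by simp
  show ?case unfolding e using Fadd[OF a b] .
qed

lemma pw0: "pw 0 k = (0::'a)" by (induction k) auto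

definition et :: "'a \<Rightarrow> nat \<Rightarrow> 'a" where
  "et x n = sm (inverse (of_nat (fact (Suc n)))) (pw x n)"

lemma expm1_et: "expm1 sm F x = fsum F (et x)"
  unfolding expm1_def et_def ..

lemma etF: "x \<in> F 1 \<Longrightarrow> et x i \<in> F i"
  unfolding et_def using smF pw1 Fdec by blast

lemma et0: "et x 0 = x"
  unfolding et_def using sm_one[OF KV] by simp

lemma expm1_c:
  assumes "n \<ge> 1" "x \<in> F 1" "x' \<in> F 1" "x - x' \<in> F n"
  shows "expm1 sm F x - expm1 sm F x' - (x - x') \<in> F (Suc n)"
proof -
  have "fsum F (et x) - fsum F (et x') - (et x 0 - et x' 0) \<in> F (Suc n)"
  proof (rule fsum_diff)
    show "et x i \<in> F i" "et x' i \<in> F i" for i using etF assms by auto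
    fix i :: nat assume i: "i \<ge> 1"
    have "et x i - et x' i = sm (inverse (of_nat (fact (Suc i)))) (pw x i - pw x' i)"
      unfolding et_def using sm_diff[OF KV] by simp
    also have "\<dots> \<in> F (n + i)" using smF pwd assms by blast
    finally show "et x i - et x' i \<in> F (Suc n)" using Fmono[of "Suc n" "n + i"] i by simp
  qed
  then show ?thesis unfolding expm1_et et0 .
qed

lemma expm1_0: "expm1 sm F 0 = 0"
  unfolding expm1_et et_def pw0 sm_zero[OF KV] by (rule fsum_zero)

lemma expm1_1: "x \<in> F 1 \<Longrightarrow> expm1 sm F x \<in> F 1"
  using expm1_c[of 1 x 0] Fzero expm1_0 Fdec Fadd[of "expm1 sm F x - x" 1 x]
  by (metis One_nat_def diff_add_cancel diff_zero le_refl subsetD)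

lemma expm1_inj: "inj_on (expm1 sm F) (F 1)"
proof (rule inj_onI)
  fix z z' assume h: "z \<in> F 1" "z' \<in> F 1" "expm1 sm F z = expm1 sm F z'"
  have "z - z' = 0"
  proof (rule Fall_zero1)
    show "z - z' \<in> F 1" using h Fdiff by blast
    fix n assume "n \<ge> 1" "z - z' \<in> F n"
    then have "expm1 sm F z - expm1 sm F z' - (z - z') \<in> F (Suc n)" using expm1_c h by blast
    then show "z - z' \<in> F (Suc n)" using h Fneg by fastforce
  qed
  then show "z = z'" by simp
qed

lemma expm1_surj:
  assumes w: "w \<in> F 1" shows "\<exists>z\<in>F 1. expm1 sm F z = w"
proof -
  have "\<exists>!z. z \<in> F 1 \<and> z = w - (expm1 sm F z - z)"
  proof (rule fixpt)
    fix b assume "b \<in> F 1"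
    then show "w - (expm1 sm F b - b) \<in> F 1" using w expm1_1 Fdiff by blast
  next
    fix n b b' assume h: "n \<ge> 1" "b \<in> F 1" "b' \<in> F 1" "b - b' \<in> F n"
    have "- (expm1 sm F b - expm1 sm F b' - (b - b')) \<in> F (Suc n)" using expm1_c h Fneg by blast
    then show "w - (expm1 sm F b - b) - (w - (expm1 sm F b' - b')) \<in> F (Suc n)"
      by (simp add: algebra_simps)
  qed
  then obtain z where "z \<in> F 1" "z = w - (expm1 sm F z - z)" by blast
  then show ?thesis by (intro bexI[of _ z]) (simp add: algebra_simps, simp)
qed

lemma ep1: "x \<in> F 1 \<Longrightarrow> y \<in> F 1 \<Longrightarrow> expprod_m1 sm F x y \<in> F 1"
  unfolding expprod_m1_def
  using expm1_1 mulF[of "expm1 sm F x" 1 "expm1 sm F y" 1] Fmono[of 1 2] Fadd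
  by (metis one_add_one one_le_numeral)

lemma Kx:
  assumes "x \<in> F 1" "y \<in> F 1"
  shows "assoc_BCH sm F x y \<in> F 1 \<and> expm1 sm F (x + y + assoc_BCH sm F x y) = expprod_m1 sm F x y"
proof -
  obtain u where u: "u \<in> F 1" "expm1 sm F u = expprod_m1 sm F x y" using expm1_surj ep1 assms by blast
  have ex: "\<exists>!z. z \<in> F 1 \<and> expm1 sm F (x + y + z) = expprod_m1 sm F x y"
  proof (rule ex1I[of _ "u - x - y"])
    show "u - x - y \<in> F 1 \<and> expm1 sm F (x + y + (u - x - y)) = expprod_m1 sm F x y"
      using u assms Fdiff by simp
    fix z assume z: "z \<in> F 1 \<and> expm1 sm F (x + y + z) = expprod_m1 sm F x y"
    have "x + y + z = u" using inj_onD[OF expm1_inj, of "x + y + z" u] z u assms Fadd by simp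
    then show "z = u - x - y" by (simp add: algebra_simps)
  qed
  show ?thesis unfolding assoc_BCH_def using theI'[OF ex] .
qed

lemma Rc:
  assumes n: "n \<ge> 1" and h: "x \<in> F 1" "y \<in> F 1" "x' \<in> F 1" "y' \<in> F 1" "x - x' \<in> F n" "y - y' \<in> F n"
  shows "(expprod_m1 sm F x y - x - y) - (expprod_m1 sm F x' y' - x' - y') \<in> F (Suc n)"
proof -
  let ?e = "expm1 sm F"
  have cx: "?e x - ?e x' - (x - x') \<in> F (Suc n)" and cy: "?e y - ?e y' - (y - y') \<in> F (Suc n)"
    using expm1_c n h by auto
  have dx: "?e x - ?e x' \<in> F n" using Fadd[OF h(5) Fmono[OF _ cx]] by simp
  have dy: "?e y - ?e y' \<in> F n" using Fadd[OF h(6) Fmono[OF _ cy]] by simp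
  have p1: "(?e x - ?e x') * ?e y \<in> F (Suc n)" using mulF[OF dx expm1_1[OF h(2)]] by simp
  have p2: "?e x' * (?e y - ?e y') \<in> F (Suc n)" using mulF[OF expm1_1[OF h(3)] dy] by simp
  have e: "(expprod_m1 sm F x y - x - y) - (expprod_m1 sm F x' y' - x' - y')
     = (?e x - ?e x' - (x - x')) + (?e y - ?e y' - (y - y')) + ((?e x - ?e x') * ?e y + ?e x' * (?e y - ?e y'))"
    unfolding expprod_m1_def by (simp add: algebra_simps)
  show ?thesis unfolding e using cx cy p1 p2 Fadd by blast
qed

lemma Bc:
  assumes n: "n \<ge> 1" and h: "x \<in> F 1" "y \<in> F 1" "x' \<in> F 1" "y' \<in> F 1" "x - x' \<in> F n" "y - y' \<in> F n"
  shows "assoc_BCH sm F x y - assoc_BCH sm F x' y' \<in> F (Suc n)"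
proof -
  let ?e = "expm1 sm F" and ?B = "assoc_BCH sm F"
  define z where "z = x + y + ?B x y"
  define z' where "z' = x' + y' + ?B x' y'"
  have K1: "?B x y \<in> F 1" "?e z = expprod_m1 sm F x y" using Kx[OF h(1,2)] z_def by auto
  have K2: "?B x' y' \<in> F 1" "?e z' = expprod_m1 sm F x' y'" using Kx[OF h(3,4)] z'_def by auto
  have z1: "z \<in> F 1" "z' \<in> F 1" unfolding z_def z'_def
    by (intro Fadd h K1 K2)+
  note ez = K1(2) K2(2)
  have R: "(expprod_m1 sm F x y - x - y) - (expprod_m1 sm F x' y' - x' - y') \<in> F (Suc n)"
    by (rule Rc) (use n h in auto)
  have step: "?B x y - ?B x' y' \<in> F (Suc k)" if k: "k \<ge> 1" "k \<le> n" "z - z' \<in> F k" for k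
  proof -
    have E: "?e z - ?e z' - (z - z') \<in> F (Suc k)" by (rule expm1_c) (use k z1 in auto)
    have R': "(expprod_m1 sm F x y - x - y) - (expprod_m1 sm F x' y' - x' - y') \<in> F (Suc k)"
      using Fmono[OF _ R] k by simp
    have "?B x y - ?B x' y' = ((expprod_m1 sm F x y - x - y) - (expprod_m1 sm F x' y' - x' - y'))
        - (?e z - ?e z' - (z - z'))"
      unfolding ez by (simp add: z_def z'_def algebra_simps)
    then show ?thesis using Fdiff[OF R' E] by simp
  qed
  have zk: "k \<ge> 1 \<Longrightarrow> k \<le> n \<Longrightarrow> z - z' \<in> F k" for k
  proof (induction k)
    case 0 then show ?case by simp
  next
    case (Suc k)
    show ?case
    proof (cases "k = 0")
      case True then show ?thesis using z1 Fdiff by simp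
    next
      case False
      then have kk: "k \<ge> 1" "k \<le> n" "z - z' \<in> F k" using Suc by auto
      have "z - z' = (x - x') + (y - y') + (?B x y - ?B x' y')" by (simp add: z_def z'_def algebra_simps)
      moreover have "x - x' \<in> F (Suc k)" "y - y' \<in> F (Suc k)" using Suc.prems h Fmono by auto
      ultimately show ?thesis using Fadd[OF Fadd step[OF kk]] by simp
    qed
  qed
  show ?thesis using step[OF n le_refl zk[OF n le_refl]] .
qed

lemma bchc_assoc:
  assumes "K_linear sm P" "\<forall>x. P (P x) = P x" "filtration_preserving F P"
  shows "bchc F (assoc_BCH sm F) P"
proof (intro bchc.intro bchc_axioms.intro)
  show "filt F" by (rule filt_axioms)
  show "x \<in> F 1 \<Longrightarrow> y \<in> F 1 \<Longrightarrow> assoc_BCH sm F x y \<in> F 1" for x y using Kx by blast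
  show "assoc_BCH sm F x y - assoc_BCH sm F x' y' \<in> F (Suc n)" if "1 \<le> n" "x \<in> F 1" "y \<in> F 1" "x' \<in> F 1" "y' \<in> F 1"
       "x - x' \<in> F n" "y - y' \<in> F n" for n x y x' y' using Bc that by blast
  show "P (x + y) = P x + P y" for x y using assms(1) unfolding K_linear_def by blast
  show "P (P x) = P x" for x using assms(2) by blast
  show "x \<in> F n \<Longrightarrow> P x \<in> F n" for n x using assms(3) unfolding filtration_preserving_def by blast
qed

end


locale lie =
  fixes smL :: "'k::field_char_0 \<Rightarrow> 'b::ab_group_add \<Rightarrow> 'b" and br :: "'b \<Rightarrow> 'b \<Rightarrow> 'b"
    and G :: "nat \<Rightarrow> 'b set"
  assumes CL: "complete_filtered_Lie_algebra smL br G"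

lemma (in lie) KV: "K_vector_space smL"
  using CL unfolding complete_filtered_Lie_algebra_def by (rule conjunct1)
lemma (in lie) CF: "complete_filtration smL G"
  using CL unfolding complete_filtered_Lie_algebra_def by (elim conjE)

sublocale lie \<subseteq> filt G
  using filt_of[OF KV CF] .

context lie
begin

lemma smF: "x \<in> G n \<Longrightarrow> smL c x \<in> G n"
proof -
  assume x: "x \<in> G n"
  have "\<forall>n. 0 \<in> G n \<and> (\<forall>x\<in>G n. \<forall>y\<in>G n. x + y \<in> G n) \<and> (\<forall>c. \<forall>x\<in>G n. smL c x \<in> G n)"
    using CF unfolding complete_filtration_def by (elim conjE)
  then show ?thesis using x by blast
qed

lemma brF: "x \<in> G m \<Longrightarrow> y \<in> G n \<Longrightarrow> br x y \<in> G (m + n)"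
proof -
  assume xy: "x \<in> G m" "y \<in> G n"
  have "\<forall>m n. \<forall>x\<in>G m. \<forall>y\<in>G n. br x y \<in> G (m + n)"
    using CL unfolding complete_filtered_Lie_algebra_def by (elim conjE)
  then show ?thesis using xy by blast
qed

lemma br_addl: "br (x + y) z = br x z + br y z"
proof -
  have "\<forall>x y z. br (x + y) z = br x z + br y z"
    using CL unfolding complete_filtered_Lie_algebra_def by (elim conjE)
  then show ?thesis by blast
qed

lemma br_addr: "br x (y + z) = br x y + br x z"
proof -
  have "\<forall>x y z. br x (y + z) = br x y + br x z"
    using CL unfolding complete_filtered_Lie_algebra_def by (elim conjE)
  then show ?thesis by blast
qed

lemma br_diffl: "br (x - y) z = br x z - br y z"
  using br_addl[of "x - y" y z] by (simp add: eq_diff_eq)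
lemma br_diffr: "br x (y - z) = br x y - br x z"
  using br_addr[of x "y - z" z] by (simp add: eq_diff_eq)

lemma lw1: "x \<in> G 1 \<Longrightarrow> y \<in> G 1 \<Longrightarrow> w \<noteq> [] \<Longrightarrow> lie_word br x y w \<in> G (length w)"
proof (induction w rule: induct_list012)
  case 1 then show ?case by simp
next
  case (2 b) then show ?case by simp
next
  case (3 b c w)
  have u: "lie_word br x y (c # w) \<in> G (length (c # w))" using 3 by simp
  have a: "(if b then x else y) \<in> G 1" using 3 by simp
  from a u have "br (if b then x else y) (lie_word br x y (c # w)) \<in> G (1 + length (c # w))"
    by (rule brF)
  then show ?case by simp
qed

lemma lwd:
  assumes h: "x \<in> G 1" "y \<in> G 1" "x' \<in> G 1" "y' \<in> G 1" "x - x' \<in> G n" "y - y' \<in> G n"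
  shows "w \<noteq> [] \<Longrightarrow> lie_word br x y w - lie_word br x' y' w \<in> G (n + length w - 1)"
proof (induction w rule: induct_list012)
  case 1 then show ?case by simp
next
  case (2 b) then show ?case using h by simp
next
  case (3 b c w)
  let ?a = "if b then x else y" and ?a' = "if b then x' else y'"
  let ?u = "lie_word br x y (c # w)" and ?u' = "lie_word br x' y' (c # w)"
  have e: "lie_word br x y (b # c # w) - lie_word br x' y' (b # c # w) = br (?a - ?a') ?u + br ?a' (?u - ?u')"
    by (simp add: br_diffl br_diffr)
  have a: "br (?a - ?a') ?u \<in> G (n + length (c # w))"
    by (rule brF) (use h lw1[of x y "c # w"] in auto)
  have b: "br ?a' (?u - ?u') \<in> G (1 + (n + length (c # w) - 1))"
    by (rule brF) (use h 3 in auto)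
  show ?case unfolding e using Fadd[OF a] b by simp
qed

lemma wlen: "length (concat (map (\<lambda>p. replicate (fst p) True @ replicate (snd p) False) ps))
   = sum_list (map (\<lambda>p. fst p + snd p) ps)"
  by (induction ps) auto

lemma dd1:
  assumes "x \<in> G 1" "y \<in> G 1" "N \<ge> 1"
  shows "dynkin_deg smL br x y N \<in> G N"
  unfolding dynkin_deg_def
proof (intro Fsum smF)
  fix n ps assume "ps \<in> {ps :: (nat \<times> nat) list. length ps = n \<and> (\<forall>p\<in>set ps. 0 < fst p + snd p)
                         \<and> sum_list (map (\<lambda>p. fst p + snd p) ps) = N}"
  then have l: "length (concat (map (\<lambda>p. replicate (fst p) True @ replicate (snd p) False) ps)) = N"
    using wlen by simp
  then have "concat (map (\<lambda>p. replicate (fst p) True @ replicate (snd p) False) ps) \<noteq> []"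
    using l assms by (metis list.size(3) not_one_le_zero)
  then show "lie_word br x y (concat (map (\<lambda>p. replicate (fst p) True @ replicate (snd p) False) ps)) \<in> G N"
    using lw1[OF assms(1,2)] l by metis
qed

lemma ddd:
  assumes h: "x \<in> G 1" "y \<in> G 1" "x' \<in> G 1" "y' \<in> G 1" "x - x' \<in> G n" "y - y' \<in> G n"
    and N: "N \<ge> 1"
  shows "dynkin_deg smL br x y N - dynkin_deg smL br x' y' N \<in> G (n + N - 1)"
  unfolding dynkin_deg_def sum_subtractf[symmetric] sm_diff[OF KV, symmetric]
proof (intro Fsum smF)
  fix n' ps assume "ps \<in> {ps :: (nat \<times> nat) list. length ps = n' \<and> (\<forall>p\<in>set ps. 0 < fst p + snd p)
                         \<and> sum_list (map (\<lambda>p. fst p + snd p) ps) = N}"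
  then have l: "length (concat (map (\<lambda>p. replicate (fst p) True @ replicate (snd p) False) ps)) = N"
    using wlen by simp
  then have "concat (map (\<lambda>p. replicate (fst p) True @ replicate (snd p) False) ps) \<noteq> []"
    using l N by (metis list.size(3) not_one_le_zero)
  then show "lie_word br x y (concat (map (\<lambda>p. replicate (fst p) True @ replicate (snd p) False) ps))
      - lie_word br x' y' (concat (map (\<lambda>p. replicate (fst p) True @ replicate (snd p) False) ps)) \<in> G (n + N - 1)"
    using lwd[OF h] l by metis
qed

lemma dd_one: "dynkin_deg smL br x y 1 = x + y"
proof -
  have S: "{ps :: (nat \<times> nat) list. length ps = 1 \<and> (\<forall>p\<in>set ps. 0 < fst p + snd p)
                         \<and> sum_list (map (\<lambda>p. fst p + snd p) ps) = 1} = {[(1, 0)], [(0, 1)]}"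
  proof (rule set_eqI, rule iffI)
    fix ps :: "(nat \<times> nat) list"
    assume "ps \<in> {ps. length ps = 1 \<and> (\<forall>p\<in>set ps. 0 < fst p + snd p) \<and> sum_list (map (\<lambda>p. fst p + snd p) ps) = 1}"
    then have l: "length ps = 1" and s: "sum_list (map (\<lambda>p. fst p + snd p) ps) = 1" by auto
    from l obtain a b where ps: "ps = [(a, b)]" by (metis One_nat_def length_0_conv length_Suc_conv prod.collapse)
    then have "a + b = 1" using s by simp
    then have "(a, b) = (1, 0) \<or> (a, b) = (0, 1)" by auto
    then show "ps \<in> {[(1, 0)], [(0, 1)]}" using ps by auto
  qed auto
  have sg: "sum h {1::nat} = h 1" for h :: "nat \<Rightarrow> 'b" by simp
  show ?thesis unfolding dynkin_deg_def atLeastAtMost_singleton sg S by (simp add: sm_one[OF KV])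
qed

lemma lw0: "lie_word br 0 0 w = 0"
proof (induction w rule: induct_list012)
  case (3 b c w) then show ?case using br_diffr[of _ 0 0] by simp
qed auto

lemma Lie_c:
  assumes n: "n \<ge> 1" and h: "x \<in> G 1" "y \<in> G 1" "x' \<in> G 1" "y' \<in> G 1" "x - x' \<in> G n" "y - y' \<in> G n"
  shows "Lie_BCH smL br G x y - Lie_BCH smL br G x' y' \<in> G (Suc n)"
proof -
  let ?f = "\<lambda>N. dynkin_deg smL br x y (Suc N)" and ?g = "\<lambda>N. dynkin_deg smL br x' y' (Suc N)"
  have "fsum G ?f - fsum G ?g - (?f 0 - ?g 0) \<in> G (Suc n)"
  proof (rule fsum_diff)
    show "?f i \<in> G i" for i using dd1[OF h(1,2), of "Suc i"] Fdec by auto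
    show "?g i \<in> G i" for i using dd1[OF h(3,4), of "Suc i"] Fdec by auto
    fix i :: nat assume i: "i \<ge> 1"
    have "?f i - ?g i \<in> G (n + Suc i - 1)" by (rule ddd[OF h]) simp
    then show "?f i - ?g i \<in> G (Suc n)" using Fmono[of "Suc n" "n + Suc i - 1"] i by simp
  qed
  then show ?thesis unfolding Lie_BCH_def using dd_one[of x y] dd_one[of x' y'] by (simp add: algebra_simps)
qed

lemma Lie_1:
  assumes h: "x \<in> G 1" "y \<in> G 1"
  shows "Lie_BCH smL br G x y \<in> G 1"
proof -
  let ?f = "\<lambda>N. dynkin_deg smL br x y (Suc N)"
  have "fsum G ?f - fsum G (\<lambda>_. 0) - (?f 0 - 0) \<in> G 1"
  proof (rule fsum_diff)
    show "?f i \<in> G i" for i using dd1[OF h, of "Suc i"] Fdec by auto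
    show "(0::'b) \<in> G i" for i by (rule Fzero)
    fix i :: nat assume i: "i \<ge> 1"
    have "?f i \<in> G (Suc i)" using dd1[OF h, of "Suc i"] by simp
    then show "?f i - 0 \<in> G 1" using Fmono[of 1 "Suc i"] by simp
  qed
  then show ?thesis unfolding Lie_BCH_def using dd_one[of x y] fsum_zero by (simp add: algebra_simps)
qed

lemma bchc_lie:
  assumes "K_linear smL Q" "\<forall>x. Q (Q x) = Q x" "filtration_preserving G Q"
  shows "bchc G (Lie_BCH smL br G) Q"
proof (intro bchc.intro bchc_axioms.intro)
  show "filt G" by (rule filt_axioms)
  show "x \<in> G 1 \<Longrightarrow> y \<in> G 1 \<Longrightarrow> Lie_BCH smL br G x y \<in> G 1" for x y by (rule Lie_1)
  show "Lie_BCH smL br G x y - Lie_BCH smL br G x' y' \<in> G (Suc n)" if "1 \<le> n" "x \<in> G 1" "y \<in> G 1" "x' \<in> G 1" "y' \<in> G 1"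
       "x - x' \<in> G n" "y - y' \<in> G n" for n x y x' y' using Lie_c that by blast
  show "Q (x + y) = Q x + Q y" for x y using assms(1) unfolding K_linear_def by blast
  show "Q (Q x) = Q x" for x using assms(2) by blast
  show "x \<in> G n \<Longrightarrow> Q x \<in> G n" for n x using assms(3) unfolding filtration_preserving_def by blast
qed

end

theorem theorem2p4:
  fixes sm :: "'k::field_char_0 \<Rightarrow> 'a::ring \<Rightarrow> 'a" and F :: "nat \<Rightarrow> 'a set" and P :: "'a \<Rightarrow> 'a"
    and smL :: "'k \<Rightarrow> 'b::ab_group_add \<Rightarrow> 'b" and br :: "'b \<Rightarrow> 'b \<Rightarrow> 'b"
    and G :: "nat \<Rightarrow> 'b set" and Q :: "'b \<Rightarrow> 'b"
  shows
  "(complete_filtered_assoc_algebra sm F \<and> K_linear sm P \<and> (\<forall>x. P (P x) = P x)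
      \<and> filtration_preserving F P \<longrightarrow>
    (let B = assoc_BCH sm F; Pt = compl_proj P; Am = A1_minus F P; Ap = A1_plus F P;
         Cm = (\<lambda>(u, v). Cop B u v); chi = bch_chi F B P; chit = bch_chi F B Pt
     in bij_betw Cm (Am \<times> Ap) (F 1)
      \<and> (\<forall>a\<in>F 1. the_inv_into (Am \<times> Ap) Cm a = (P (chi a), Pt (chi a)))
      \<and> (\<exists>\<Psi>. bij_betw \<Psi> (Ap \<times> Am) (Am \<times> Ap)
           \<and> (\<forall>ap\<in>Ap. \<forall>am\<in>Am. expprod_m1 sm F ap am
                 = expprod_m1 sm F (fst (\<Psi> (ap, am))) (snd (\<Psi> (ap, am))))
           \<and> (\<forall>\<Phi>. bij_betw \<Phi> (Ap \<times> Am) (Am \<times> Ap)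
                 \<and> (\<forall>ap\<in>Ap. \<forall>am\<in>Am. expprod_m1 sm F ap am
                       = expprod_m1 sm F (fst (\<Phi> (ap, am))) (snd (\<Phi> (ap, am))))
                 \<longrightarrow> (\<forall>a\<in>Ap \<times> Am. \<Phi> a = \<Psi> a))
           \<and> (\<forall>ap\<in>Ap. \<forall>am\<in>Am.
                 \<Psi> (ap, am) = (P (chi (Cop B ap am)), Pt (chi (Cop B ap am)))
               \<and> \<Psi> (ap, am) = (P (chi (the_inv_into (F 1) chit (ap + am))),
                                Pt (chi (the_inv_into (F 1) chit (ap + am))))))))
   \<and>
   (complete_filtered_Lie_algebra smL br G \<and> K_linear smL Q \<and> (\<forall>x. Q (Q x) = Q x)
      \<and> filtration_preserving G Q \<longrightarrow>
    (let B = Lie_BCH smL br G; Pt = compl_proj Q; Am = A1_minus G Q; Ap = A1_plus G Q;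
         Cm = (\<lambda>(u, v). Cop B u v); chi = bch_chi G B Q; chit = bch_chi G B Pt
     in bij_betw Cm (Am \<times> Ap) (G 1)
      \<and> (\<forall>a\<in>G 1. the_inv_into (Am \<times> Ap) Cm a = (Q (chi a), Pt (chi a)))
      \<and> (\<exists>\<Psi>. bij_betw \<Psi> (Ap \<times> Am) (Am \<times> Ap)
           \<and> (\<forall>ap\<in>Ap. \<forall>am\<in>Am. Cop B ap am = Cop B (fst (\<Psi> (ap, am))) (snd (\<Psi> (ap, am))))
           \<and> (\<forall>\<Phi>. bij_betw \<Phi> (Ap \<times> Am) (Am \<times> Ap)
                 \<and> (\<forall>ap\<in>Ap. \<forall>am\<in>Am. Cop B ap am = Cop B (fst (\<Phi> (ap, am))) (snd (\<Phi> (ap, am))))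
                 \<longrightarrow> (\<forall>a\<in>Ap \<times> Am. \<Phi> a = \<Psi> a))
           \<and> (\<forall>ap\<in>Ap. \<forall>am\<in>Am.
                 \<Psi> (ap, am) = (Q (chi (Cop B ap am)), Pt (chi (Cop B ap am)))
               \<and> \<Psi> (ap, am) = (Q (chi (the_inv_into (G 1) chit (ap + am))),
                                Pt (chi (the_inv_into (G 1) chit (ap + am))))))))"
proof (intro conjI impI)
  assume h: "complete_filtered_assoc_algebra sm F \<and> K_linear sm P \<and> (\<forall>x. P (P x) = P x) \<and> filtration_preserving F P"
  interpret A: assoc sm F by (rule assoc.intro) (use h in blast)
  interpret BA: bchc F "assoc_BCH sm F" P by (rule A.bchc_assoc) (use h in auto)
  have R: "expprod_m1 sm F u v = expm1 sm F (Cop (assoc_BCH sm F) u v)" if "u \<in> F 1" "v \<in> F 1" for u v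
    using A.Kx[OF that] unfolding Cop_def by simp
  note psi = BA.psi[OF A.expm1_inj, of "expprod_m1 sm F", OF R]
  note mg = BA.main_gen
  show "let B = assoc_BCH sm F; Pt = compl_proj P; Am = A1_minus F P; Ap = A1_plus F P;
         Cm = (\<lambda>(u, v). Cop B u v); chi = bch_chi F B P; chit = bch_chi F B Pt
     in bij_betw Cm (Am \<times> Ap) (F 1)
      \<and> (\<forall>a\<in>F 1. the_inv_into (Am \<times> Ap) Cm a = (P (chi a), Pt (chi a)))
      \<and> (\<exists>\<Psi>. bij_betw \<Psi> (Ap \<times> Am) (Am \<times> Ap)
           \<and> (\<forall>ap\<in>Ap. \<forall>am\<in>Am. expprod_m1 sm F ap am
                 = expprod_m1 sm F (fst (\<Psi> (ap, am))) (snd (\<Psi> (ap, am))))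
           \<and> (\<forall>\<Phi>. bij_betw \<Phi> (Ap \<times> Am) (Am \<times> Ap)
                 \<and> (\<forall>ap\<in>Ap. \<forall>am\<in>Am. expprod_m1 sm F ap am
                       = expprod_m1 sm F (fst (\<Phi> (ap, am))) (snd (\<Phi> (ap, am))))
                 \<longrightarrow> (\<forall>a\<in>Ap \<times> Am. \<Phi> a = \<Psi> a))
           \<and> (\<forall>ap\<in>Ap. \<forall>am\<in>Am.
                 \<Psi> (ap, am) = (P (chi (Cop B ap am)), Pt (chi (Cop B ap am)))
               \<and> \<Psi> (ap, am) = (P (chi (the_inv_into (F 1) chit (ap + am))),
                                Pt (chi (the_inv_into (F 1) chit (ap + am))))))"
    unfolding Let_def by (intro conjI mg[THEN conjunct1] mg[THEN conjunct2] psi)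
next
  assume h: "complete_filtered_Lie_algebra smL br G \<and> K_linear smL Q \<and> (\<forall>x. Q (Q x) = Q x) \<and> filtration_preserving G Q"
  interpret L: lie smL br G by (rule lie.intro) (use h in blast)
  interpret BL: bchc G "Lie_BCH smL br G" Q by (rule L.bchc_lie) (use h in auto)
  have inj: "inj_on (\<lambda>x. x) (G 1)" by simp
  note psi = BL.psi[OF inj, of "Cop (Lie_BCH smL br G)", OF refl]
  note mg = BL.main_gen
  show "let B = Lie_BCH smL br G; Pt = compl_proj Q; Am = A1_minus G Q; Ap = A1_plus G Q;
         Cm = (\<lambda>(u, v). Cop B u v); chi = bch_chi G B Q; chit = bch_chi G B Pt
     in bij_betw Cm (Am \<times> Ap) (G 1)
      \<and> (\<forall>a\<in>G 1. the_inv_into (Am \<times> Ap) Cm a = (Q (chi a), Pt (chi a)))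
      \<and> (\<exists>\<Psi>. bij_betw \<Psi> (Ap \<times> Am) (Am \<times> Ap)
           \<and> (\<forall>ap\<in>Ap. \<forall>am\<in>Am. Cop B ap am = Cop B (fst (\<Psi> (ap, am))) (snd (\<Psi> (ap, am))))
           \<and> (\<forall>\<Phi>. bij_betw \<Phi> (Ap \<times> Am) (Am \<times> Ap)
                 \<and> (\<forall>ap\<in>Ap. \<forall>am\<in>Am. Cop B ap am = Cop B (fst (\<Phi> (ap, am))) (snd (\<Phi> (ap, am))))
                 \<longrightarrow> (\<forall>a\<in>Ap \<times> Am. \<Phi> a = \<Psi> a))
           \<and> (\<forall>ap\<in>Ap. \<forall>am\<in>Am.
                 \<Psi> (ap, am) = (Q (chi (Cop B ap am)), Pt (chi (Cop B ap am)))
               \<and> \<Psi> (ap, am) = (Q (chi (the_inv_into (G 1) chit (ap + am))),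
                                Pt (chi (the_inv_into (G 1) chit (ap + am))))))"
    unfolding Let_def by (intro conjI mg[THEN conjunct1] mg[THEN conjunct2] psi)
qed

end
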